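(* Let $\Lambda\subset Y$ satisfy condition (★), let $J$ be generic as in the context, and let $e\ge2$ be an integer with $|a|\ge e$ for every Reeb chord $a$ of $\Lambda$. Then for every integer $p$ with $1\le p\le 3e-1$, $$\dim_{\mathbb{Z}/2}\mathrm{LCH}_p(\Lambda)=\dim\ker\big((\delta_J)_*:HL_p(\Lambda)\to HL^2_{p-1}(\Lambda)\big)+\dim\operatorname{coker}\big((\delta_J)_*:HL_{p+1}(\Lambda)\to HL^2_p(\Lambda)\big).$$
   Context: Let $(Y,\alpha)$ be a $(2n-1)$-dimensional contact manifold with a diffeomorphism $Y\cong\mathbb{R}\times P$ pulling back $dz+\lambda_P$ to $\alpha$, where $(P,\lambda_P)$ is the completion of a compact Liouville domain with $2c_1(TP)=0$ and $H_1(P;\mathbb{Z})=0$. Let $\Lambda\subset Y$ be a compact connected Legendrian submanifold with vanishing Maslov class, all Reeb chords non-degenerate, each Reeb chord $a$ graded by $|a|=\mu(a)-1$ ($\mu$ the Conley–Zehnder index defined via capping paths in $\Lambda$). For a generic almost complex structure $J$ on $\mathbb{R}\times Y$ that is compatible with $d(e^r\alpha)$, $\mathbb{R}$-invariant, preserves $\xi=\ker\alpha$, sends $\partial_r$ to the Reeb vector field, and equals a fixed such structure outside a compact set, $\mathcal{M}_J(a;b_1,\dots,b_m)$ denotes the moduli space, modulo $\mathbb{R}$-translation and conformal reparametrization, of $J$-holomorphic disks with boundary punctures $p_0,\dots,p_m$ (clockwise) and boundary on $\mathbb{R}\times\Lambda$, positively asymptotic at $p_0$ to the strip over $a$ and negatively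 asymptotic at $p_k$ to the strip over $b_k$; for $(b_1,\dots,b_m)\ne(a)$ it is a manifold of dimension $|a|-1-\sum_k|b_k|$, compact when $0$-dimensional. The Chekanov–Eliashberg DGA $(\mathcal{A}_*(\Lambda),\partial_J)$ is the unital free noncommutative graded $\mathbb{Z}/2$-algebra on the Reeb chords with $\partial_J a=\sum_{m\ge0}\sum_{|b_1|+\dots+|b_m|=|a|-1}\#_{\mathbb{Z}/2}\mathcal{M}_J(a;b_1,\dots,b_m)\,b_1\cdots b_m$, extended by the Leibniz rule; $\partial_J^2=0$; $\mathrm{LCH}_*(\Lambda)$ is its homology. Condition (★): $|a|\ge2$ for every Reeb chord $a$ of $\Lambda$ that is homotopic, through paths with endpoints in $\Lambda$, to a constant path in $\Lambda$. Under (★): $CL_*(\Lambda)$ is the graded $\mathbb{Z}/2$-vector space spanned by the Reeb chords ($a$ in degree $|a|$), $d_Ja=\sum_{|b|=|a|-1}\#_{\mathbb{Z}/2}\mathcal{M}_J(a;b)\,b$, and $\delta_Ja=\sum_{|b_1|+|b_2|=|a|-1}\#_{\mathbb{Z}/2}\mathcal{M}_J(a;b_1,b_2)\,b_1\otimes b_2$; then $d_J^2=0$ and $\delta_J:CL_{*+1}(\Lambda)\to(CL(\Lambda)^{\otimes2})_*$ is a chain map, where $CL^{\otimes2}$ carries $d_J\otimes\mathrm{id}+\mathrm{id}\otimes d_J$. $HL_*(\Lambda)$ is the homology of $(CL_*(\Lambda),d_J)$, $HL^2_*(\Lambda)$ that of $CL^{\otimes2}$, and $(\delta_J)_*:HL_{*+1}(\Lambda)\to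 HL^2_*(\Lambda)$ the induced map. *)

theory Defs
  imports Complex_Main "HOL-Library.Z2" "HOL-Library.Function_Algebras"
begin

text \<open>Z/2-vector spaces are modelled as spaces of functions into the field bit = Z/2,
  with pointwise operations.\<close>

definition fscale :: "bit \<Rightarrow> ('x \<Rightarrow> bit) \<Rightarrow> ('x \<Rightarrow> bit)" where
  "fscale c f = (\<lambda>x. c * f x)"

definition zdim :: "('x \<Rightarrow> bit) set \<Rightarrow> nat" where
  "zdim S = vector_space.dim fscale S"

text \<open>Dimension of the subquotient A/B (used with B a subspace of the subspace A).\<close>
definition quot_dim :: "('x \<Rightarrow> bit) set \<Rightarrow> ('x \<Rightarrow> bit) set \<Rightarrow> nat" where
  "quot_dim A B = zdim A - zdim B"

definition supp :: "('x \<Rightarrow> bit) \<Rightarrow> 'x set" where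
  "supp f = {x. f x \<noteq> 0}"

definition wdeg :: "('c \<Rightarrow> int) \<Rightarrow> 'c list \<Rightarrow> int" where
  "wdeg deg w = sum_list (map deg w)"

text \<open>Degree-p part of the free noncommutative unital Z/2-algebra on the chords C:
  finite Z/2-combinations of words in C of total degree p.\<close>
definition CE_alg :: "'c set \<Rightarrow> ('c \<Rightarrow> int) \<Rightarrow> int \<Rightarrow> ('c list \<Rightarrow> bit) set" where
  "CE_alg C deg p = {x. finite (supp x) \<and> (\<forall>w\<in>supp x. set w \<subseteq> C \<and> wdeg deg w = p)}"

text \<open>n a bs is the mod 2 count of the moduli space M(a; b1,...,bm).
  Differential of a word, via the Leibniz rule (no signs over Z/2):
  the sum over i of  w_1...w_(i-1) (d w_i) w_(i+1)...w_k.\<close>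
definition CE_word :: "('c \<Rightarrow> 'c list \<Rightarrow> bit) \<Rightarrow> 'c list \<Rightarrow> ('c list \<Rightarrow> bit)" where
  "CE_word n w = (\<lambda>v. \<Sum>i<length w. \<Sum>u\<in>{u. take i w @ u @ drop (Suc i) w = v}. n (w ! i) u)"

definition CE_diff :: "('c \<Rightarrow> 'c list \<Rightarrow> bit) \<Rightarrow> ('c list \<Rightarrow> bit) \<Rightarrow> ('c list \<Rightarrow> bit)" where
  "CE_diff n x = (\<lambda>v. \<Sum>w\<in>supp x. x w * CE_word n w v)"

definition LCH_dim :: "'c set \<Rightarrow> ('c \<Rightarrow> int) \<Rightarrow> ('c \<Rightarrow> 'c list \<Rightarrow> bit) \<Rightarrow> int \<Rightarrow> nat" where
  "LCH_dim C deg n p =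
     quot_dim {x \<in> CE_alg C deg p. CE_diff n x = 0} (CE_diff n ` CE_alg C deg (p + 1))"

definition CL :: "'c set \<Rightarrow> ('c \<Rightarrow> int) \<Rightarrow> int \<Rightarrow> ('c \<Rightarrow> bit) set" where
  "CL C deg p = {x. \<forall>a. x a \<noteq> 0 \<longrightarrow> a \<in> C \<and> deg a = p}"

definition CL2 :: "'c set \<Rightarrow> ('c \<Rightarrow> int) \<Rightarrow> int \<Rightarrow> ('c \<times> 'c \<Rightarrow> bit) set" where
  "CL2 C deg p = {y. \<forall>b1 b2. y (b1, b2) \<noteq> 0 \<longrightarrow> b1 \<in> C \<and> b2 \<in> C \<and> deg b1 + deg b2 = p}"

definition dL :: "'c set \<Rightarrow> ('c \<Rightarrow> 'c list \<Rightarrow> bit) \<Rightarrow> ('c \<Rightarrow> bit) \<Rightarrow> ('c \<Rightarrow> bit)" where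
  "dL C n x = (\<lambda>b. \<Sum>a\<in>C. x a * n a [b])"

definition deltaL :: "'c set \<Rightarrow> ('c \<Rightarrow> 'c list \<Rightarrow> bit) \<Rightarrow> ('c \<Rightarrow> bit) \<Rightarrow> ('c \<times> 'c \<Rightarrow> bit)" where
  "deltaL C n x = (\<lambda>(b1, b2). \<Sum>a\<in>C. x a * n a [b1, b2])"

text \<open>d (x) id + id (x) d on CL (x) CL.\<close>
definition dL2 :: "'c set \<Rightarrow> ('c \<Rightarrow> 'c list \<Rightarrow> bit) \<Rightarrow> ('c \<times> 'c \<Rightarrow> bit) \<Rightarrow> ('c \<times> 'c \<Rightarrow> bit)" where
  "dL2 C n y = (\<lambda>(b1, b2). \<Sum>c\<in>C. y (c, b2) * n c [b1] + y (b1, c) * n c [b2])"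

definition ZL where "ZL C deg n p = {x \<in> CL C deg p. dL C n x = 0}"
definition BL where "BL C deg n p = dL C n ` CL C deg (p + 1)"
definition ZL2 where "ZL2 C deg n p = {y \<in> CL2 C deg p. dL2 C n y = 0}"
definition BL2 where "BL2 C deg n p = dL2 C n ` CL2 C deg (p + 1)"

text \<open>dim ker ((delta)_* : HL_p -> HL^2_(p-1)):
  ker = {[z] : z cycle of degree p, delta z a boundary} inside HL_p.\<close>
definition ker_delta_dim :: "'c set \<Rightarrow> ('c \<Rightarrow> int) \<Rightarrow> ('c \<Rightarrow> 'c list \<Rightarrow> bit) \<Rightarrow> int \<Rightarrow> nat" where
  "ker_delta_dim C deg n p =
     quot_dim {z \<in> ZL C deg n p. deltaL C n z \<in> BL2 C deg n (p - 1)} (BL C deg n p)"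

text \<open>dim coker ((delta)_* : HL_(p+1) -> HL^2_p) = dim Z^2_p / (B^2_p + delta(Z_(p+1))).\<close>
definition coker_delta_dim :: "'c set \<Rightarrow> ('c \<Rightarrow> int) \<Rightarrow> ('c \<Rightarrow> 'c list \<Rightarrow> bit) \<Rightarrow> int \<Rightarrow> nat" where
  "coker_delta_dim C deg n p =
     quot_dim (ZL2 C deg n p)
       {u + v | u v. u \<in> BL2 C deg n p \<and> v \<in> deltaL C n ` ZL C deg n (p + 1)}"

end

theory Submission
  imports Defs "HOL-Library.FuncSet"
begin

declare add_bit_eq_xor[simp del] mult_bit_eq_and[simp del]

lemma bit_add_self[simp]: "(a::bit) + a = 0"
  by (cases a) (simp_all add: add_bit_eq_xor)

lemma fun_add_self[simp]: "(f::'x \<Rightarrow> bit) + f = 0"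
  by (simp add: fun_eq_iff)

lemma fun_minus_eq_add: "(f::'x \<Rightarrow> bit) - g = f + g"
  by (simp add: fun_eq_iff)

global_interpretation Z: vector_space "fscale :: bit \<Rightarrow> ('x \<Rightarrow> bit) \<Rightarrow> ('x \<Rightarrow> bit)"
  by unfold_locales (simp_all add: fscale_def fun_eq_iff algebra_simps)

lemma fscale_0[simp]: "fscale 0 x = 0" and fscale_1[simp]: "fscale 1 x = x"
  by (simp_all add: fscale_def fun_eq_iff)

definition sub :: "('x \<Rightarrow> bit) set \<Rightarrow> bool" where
  "sub S \<longleftrightarrow> 0 \<in> S \<and> (\<forall>x\<in>S. \<forall>y\<in>S. x + y \<in> S)"

lemma sub_subspace: "sub S \<Longrightarrow> Z.subspace S"
  unfolding sub_def Z.subspace_def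
  by (metis (full_types) bit_not_one_iff fscale_0 fscale_1)

lemma card_span_indep:
  assumes "finite B" "Z.independent (B :: ('x \<Rightarrow> bit) set)"
  shows "finite (Z.span B) \<and> card (Z.span B) = 2 ^ card B"
  using assms
proof (induction B rule: finite_induct)
  case empty
  then show ?case by simp
next
  case (insert b B)
  have ind: "Z.independent B" and nb: "b \<notin> Z.span B"
    using insert.prems insert.hyps by (simp_all add: Z.independent_insert)
  from insert.IH[OF ind] have fin: "finite (Z.span B)" and c: "card (Z.span B) = 2 ^ card B" by auto
  have eq: "Z.span (insert b B) = Z.span B \<union> (\<lambda>x. x + b) ` Z.span B"
  proof (rule set_eqI, rule iffI)
    fix x assume "x \<in> Z.span (insert b B)"
    then obtain k where k: "x - fscale k b \<in> Z.span B" by (auto simp: Z.span_insert)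
    show "x \<in> Z.span B \<union> (\<lambda>x. x + b) ` Z.span B"
    proof (cases "k = 0")
      case True then show ?thesis using k by simp
    next
      case False
      then have "k = 1" by simp
      then have "x + b \<in> Z.span B" using k by (simp add: fun_minus_eq_add)
      moreover have "x = (x + b) + b" by (simp add: add.assoc)
      ultimately show ?thesis by blast
    qed
  next
    fix x assume "x \<in> Z.span B \<union> (\<lambda>x. x + b) ` Z.span B"
    then show "x \<in> Z.span (insert b B)"
      by (auto intro: Z.span_add Z.span_base Z.span_mono[of B "insert b B", THEN subsetD])
  qed
  have disj: "Z.span B \<inter> (\<lambda>x. x + b) ` Z.span B = {}"
  proof (rule ccontr)
    assume "Z.span B \<inter> (\<lambda>x. x + b) ` Z.span B \<noteq> {}"
    then obtain y where y: "y \<in> Z.span B" "y + b \<in> Z.span B" by auto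
    then have "y + (y + b) \<in> Z.span B" by (rule Z.span_add)
    moreover have "y + (y + b) = b" by (simp add: add.assoc[symmetric])
    ultimately show False using nb by simp
  qed
  have inj: "inj_on (\<lambda>x. x + b) (Z.span B)" by (auto simp: inj_on_def)
  have "card (Z.span (insert b B)) = card (Z.span B) + card ((\<lambda>x. x + b) ` Z.span B)"
    unfolding eq using fin disj by (simp add: card_Un_disjoint)
  also have "\<dots> = 2 * 2 ^ card B" using c card_image[OF inj] by simp
  finally show ?case using eq fin insert.hyps by simp
qed

lemma card_zdim:
  assumes "sub S" "finite S"
  shows "card S = 2 ^ zdim S"
proof -
  obtain B where B: "B \<subseteq> S" "Z.independent B" "S \<subseteq> Z.span B" "card B = Z.dim S"
    using Z.basis_exists by blast
  have "Z.span B = S" using Z.span_subspace[OF B(1) B(3) sub_subspace[OF assms(1)]] .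
  moreover have "finite B" using B(1) assms(2) finite_subset by blast
  ultimately show ?thesis using card_span_indep[OF _ B(2)] B(4) unfolding zdim_def by metis
qed

lemma zdim_eq_iff:
  assumes "sub S" "finite S" "sub T" "finite T"
  shows "card S = card T * card U \<Longrightarrow> sub U \<Longrightarrow> finite U \<Longrightarrow> zdim S = zdim T + zdim U"
  using card_zdim assms by (metis power_add power_inject_exp one_less_numeral_iff semiring_norm(76))

lemma zdim_mono:
  assumes "sub S" "finite S" "sub T" "finite T" "T \<subseteq> S"
  shows "zdim T \<le> zdim S"
proof -
  have "card T \<le> card S" using assms card_mono by blast
  then have "(2::nat) ^ zdim T \<le> 2 ^ zdim S" using card_zdim assms by metis
  then show ?thesis by simp
qed

definition lin :: "('a \<Rightarrow> bit) set \<Rightarrow> (('a \<Rightarrow> bit) \<Rightarrow> ('b \<Rightarrow> bit)) \<Rightarrow> bool" where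
  "lin S f \<longleftrightarrow> (\<forall>x\<in>S. \<forall>y\<in>S. f (x + y) = f x + f y)"

lemma lin_zero: assumes "sub S" "lin S f" shows "f 0 = 0"
proof -
  have "f 0 = f 0 + f 0" using assms unfolding sub_def lin_def by (metis add_0)
  also have "\<dots> = 0" by simp
  finally show ?thesis .
qed

lemma sub_image: assumes "sub S" "lin S f" shows "sub (f ` S)"
  unfolding sub_def
proof (intro conjI ballI)
  show "0 \<in> f ` S" using lin_zero[OF assms] assms(1) unfolding sub_def by (metis image_eqI)
  fix u v assume "u \<in> f ` S" "v \<in> f ` S"
  then obtain x y where "x\<in>S" "y\<in>S" "u = f x" "v = f y" by blast
  then show "u + v \<in> f ` S" using assms unfolding sub_def lin_def by (metis image_eqI)
qed

lemma sub_preimage: assumes "sub S" "lin S f" "sub T" shows "sub {x\<in>S. f x \<in> T}"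
  using assms lin_zero[OF assms(1,2)] unfolding sub_def lin_def by auto

lemma sub_kernel: assumes "sub S" "lin S f" shows "sub {x\<in>S. f x = 0}"
  using assms lin_zero[OF assms(1,2)] unfolding sub_def lin_def by auto

lemma sub_sums: assumes "sub S" "sub T" shows "sub {u + v |u v. u \<in> S \<and> v \<in> T}"
  using assms unfolding sub_def
  apply auto
   apply (metis add_0)
  by (metis (no_types, lifting) add.assoc add.left_commute)

lemma card_hom:
  fixes f :: "('a\<Rightarrow>bit) \<Rightarrow> ('b\<Rightarrow>bit)"
  assumes fin: "finite S" and sS: "sub S" and lf: "lin S f"
  shows "card S = card (f`S) * card {x\<in>S. f x = 0}"
proof -
  let ?K = "{x\<in>S. f x = 0}"
  have fib: "card {x\<in>S. f x = y} = card ?K" if "y \<in> f ` S" for y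
  proof -
    from that obtain x0 where x0: "x0\<in>S" "f x0 = y" by blast
    have "{x\<in>S. f x = y} = (\<lambda>k. k + x0) ` ?K"
    proof (rule set_eqI, rule iffI)
      fix x assume x: "x \<in> {x\<in>S. f x = y}"
      then have "x + x0 \<in> ?K" using x0 sS lf unfolding sub_def lin_def by auto
      moreover have "x = (x + x0) + x0" by (simp add: add.assoc)
      ultimately show "x \<in> (\<lambda>k. k + x0) ` ?K" by blast
    next
      fix x assume "x \<in> (\<lambda>k. k + x0) ` ?K"
      then obtain k where "k\<in>S" "f k = 0" "x = k + x0" by auto
      then show "x \<in> {x\<in>S. f x = y}" using x0 sS lf unfolding sub_def lin_def by auto
    qed
    moreover have "inj_on (\<lambda>k. k + x0) ?K" by (auto simp: inj_on_def)
    ultimately show ?thesis by (simp add: card_image)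
  qed
  have "S = (\<Union>y\<in>f`S. {x\<in>S. f x = y})" by auto
  then have "card S = (\<Sum>y\<in>f`S. card {x\<in>S. f x = y})"
    using fin by (subst card_UN_disjoint[symmetric]) auto
  also have "\<dots> = (\<Sum>y\<in>f`S. card ?K)" using fib by simp
  finally show ?thesis by simp
qed

lemma UNIV_bit: "(UNIV :: bit set) = {0, 1}" by auto

lemma finite_supp_funs:
  assumes "finite W" shows "finite {x :: 'a \<Rightarrow> bit. supp x \<subseteq> W}"
proof -
  let ?A = "{x :: 'a \<Rightarrow> bit. supp x \<subseteq> W}"
  have "inj_on (\<lambda>x. restrict x W) ?A"
    unfolding inj_on_def supp_def restrict_def fun_eq_iff by (smt (verit) mem_Collect_eq subsetD)
  moreover have "(\<lambda>x. restrict x W) ` ?A \<subseteq> PiE W (\<lambda>_. UNIV)" by auto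
  moreover have "finite (PiE W (\<lambda>_. (UNIV :: bit set)))" using assms by (simp add: finite_PiE UNIV_bit)
  ultimately show ?thesis by (meson finite_imageD finite_subset)
qed

lemma sum_switch:
  assumes "finite W" "finite W'" "\<forall>w\<in>W - W'. g w = 0" "\<forall>w\<in>W' - W. g w = 0"
  shows "sum g W = sum g W'"
proof -
  have "sum g W = sum g (W \<union> W')" using assms by (intro sum.mono_neutral_left) auto
  also have "\<dots> = sum g W'" using assms by (intro sum.mono_neutral_right) auto
  finally show ?thesis .
qed

lemma len1: "length w = 1 \<Longrightarrow> w = [hd w]" by (cases w) auto
lemma len2: "length w = 2 \<Longrightarrow> w = [w!0, w!1]"
  by (cases w; cases "tl w") (auto simp: numeral_2_eq_2)

lemma wdeg_Nil[simp]: "wdeg deg [] = 0" and wdeg_Cons[simp]: "wdeg deg (a # v) = deg a + wdeg deg v"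
  and wdeg_append[simp]: "wdeg deg (u @ v) = wdeg deg u + wdeg deg v"
  by (simp_all add: wdeg_def)

definition p1 :: "('c list \<Rightarrow> bit) \<Rightarrow> ('c \<Rightarrow> bit)" where "p1 x = (\<lambda>a. x [a])"
definition p2 :: "('c list \<Rightarrow> bit) \<Rightarrow> ('c \<times> 'c \<Rightarrow> bit)" where "p2 x = (\<lambda>(a,b). x [a,b])"
definition emb :: "('c \<Rightarrow> bit) \<Rightarrow> ('c \<times> 'c \<Rightarrow> bit) \<Rightarrow> ('c list \<Rightarrow> bit)" where
  "emb z y = (\<lambda>w. if length w = 1 then z (hd w) else if length w = 2 then y (w!0, w!1) else 0)"

lemma p1_emb[simp]: "p1 (emb z y) = z" by (simp add: p1_def emb_def)
lemma p2_emb[simp]: "p2 (emb z y) = y" by (simp add: p2_def emb_def fun_eq_iff)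

lemma p1_lin: "lin S p1" by (simp add: lin_def p1_def fun_eq_iff)
lemma p2_lin: "lin S p2" by (simp add: lin_def p2_def fun_eq_iff)
lemma p1_0[simp]: "p1 0 = 0" by (simp add: p1_def fun_eq_iff)
lemma p2_0[simp]: "p2 0 = 0" by (simp add: p2_def fun_eq_iff)

lemma CEword_single: "CE_word n [a] v = n a v"
  by (simp add: CE_word_def)

lemma set_app1: "{u. u @ [b] = [c, d]} = (if b = d then {[c]} else {})"
  by (auto simp: append_eq_Cons_conv)
lemma set_app2: "{u. a # u = [c, d]} = (if a = c then {[d]} else {})"
  by auto

lemma CEword_pair: "CE_word n [a,b] [c,d] = (if b = d then n a [c] else 0) + (if a = c then n b [d] else 0)"
  by (simp add: CE_word_def numeral_2_eq_2 lessThan_Suc set_app1 set_app2)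

lemma CEword_Nil: "CE_word n [] v = 0" by (simp add: CE_word_def)

declare bit_not_zero_iff[simp del] bit_not_one_iff[simp del]
locale CE =
  fixes C :: "'c set" and deg :: "'c \<Rightarrow> int" and n :: "'c \<Rightarrow> 'c list \<Rightarrow> bit" and e :: int
  assumes finC: "finite C"
    and moduli_deg: "\<And>a bs. n a bs \<noteq> 0 \<Longrightarrow> a \<in> C \<and> set bs \<subseteq> C \<and> wdeg deg bs = deg a - 1"
    and dsq: "\<And>x. finite (supp x) \<Longrightarrow> (\<forall>w\<in>supp x. set w \<subseteq> C) \<Longrightarrow> CE_diff n (CE_diff n x) = 0"
    and e2: "e \<ge> 2"
    and deg_e: "\<And>a. a \<in> C \<Longrightarrow> deg a \<ge> e"
begin

lemma wdeg_ge: "set v \<subseteq> C \<Longrightarrow> e * int (length v) \<le> wdeg deg v"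
proof (induction v)
  case Nil then show ?case by simp
next
  case (Cons a v)
  have "e * int (length (a # v)) = e + e * int (length v)" by (simp add: distrib_left)
  then show ?case using Cons deg_e[of a] by simp
qed

lemma n_nil[simp]: "n a [] = 0"
proof (rule ccontr)
  assume "n a [] \<noteq> 0"
  from moduli_deg[OF this] have "a \<in> C" "deg a = 1" by auto
  then show False using deg_e[of a] e2 by simp
qed

definition Wset :: "int \<Rightarrow> 'c list set" where "Wset q = {v. set v \<subseteq> C \<and> wdeg deg v = q}"

lemma finite_Wset: "finite (Wset q)"
proof -
  have "Wset q \<subseteq> {v. set v \<subseteq> C \<and> length v \<le> nat q}"
  proof
    fix v assume "v \<in> Wset q"
    then have "set v \<subseteq> C" "wdeg deg v = q" by (auto simp: Wset_def)
    have "1 * int (length v) \<le> e * int (length v)" by (rule mult_right_mono) (use e2 in auto)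
    with wdeg_ge[OF \<open>set v \<subseteq> C\<close>] \<open>wdeg deg v = q\<close> have "int (length v) \<le> q" by linarith
    then show "v \<in> {v. set v \<subseteq> C \<and> length v \<le> nat q}" using \<open>set v \<subseteq> C\<close> by auto
  qed
  then show ?thesis using finite_lists_length_le[OF finC] finite_subset by blast
qed

lemma A_eq: "CE_alg C deg q = {x. supp x \<subseteq> Wset q}"
proof (rule set_eqI, rule iffI)
  fix x assume "x \<in> CE_alg C deg q"
  then show "x \<in> {x. supp x \<subseteq> Wset q}" unfolding CE_alg_def Wset_def by blast
next
  fix x assume "x \<in> {x. supp x \<subseteq> Wset q}"
  then have "supp x \<subseteq> Wset q" by simp
  moreover then have "finite (supp x)" using finite_Wset finite_subset by blast
  ultimately show "x \<in> CE_alg C deg q" unfolding CE_alg_def Wset_def by blast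
qed

lemma supp_add: "supp ((x::'a\<Rightarrow>bit) + y) \<subseteq> supp x \<union> supp y"
  unfolding supp_def by auto

lemma sub_A: "sub (CE_alg C deg q)"
  unfolding A_eq sub_def
proof (intro conjI ballI)
  show "0 \<in> {x. supp x \<subseteq> Wset q}" by (simp add: supp_def)
  fix x y assume "x \<in> {x. supp x \<subseteq> Wset q}" "y \<in> {x. supp x \<subseteq> Wset q}"
  then show "x + y \<in> {x. supp x \<subseteq> Wset q}" using supp_add[of x y] by blast
qed

lemma finite_A: "finite (CE_alg C deg q)"
  unfolding A_eq using finite_supp_funs[OF finite_Wset] .

lemma CEword_nz:
  assumes "CE_word n w v \<noteq> 0"
  shows "\<exists>i<length w. \<exists>u. take i w @ u @ drop (Suc i) w = v \<and> n (w!i) u \<noteq> 0"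
proof -
  from assms obtain i where i: "i < length w"
    "(\<Sum>u\<in>{u. take i w @ u @ drop (Suc i) w = v}. n (w ! i) u) \<noteq> 0"
    unfolding CE_word_def by (auto elim: sum.not_neutral_contains_not_neutral)
  from i(2) obtain u where "u \<in> {u. take i w @ u @ drop (Suc i) w = v}" "n (w!i) u \<noteq> 0"
    by (auto elim: sum.not_neutral_contains_not_neutral)
  then show ?thesis using i(1) by auto
qed

lemma CEword_props:
  assumes "set w \<subseteq> C" "CE_word n w v \<noteq> 0"
  shows "set v \<subseteq> C \<and> wdeg deg v = wdeg deg w - 1 \<and> length w \<le> length v"
proof -
  obtain i u where iu: "i < length w" "take i w @ u @ drop (Suc i) w = v" "n (w!i) u \<noteq> 0"
    using CEword_nz[OF assms(2)] by blast
  have w: "w = take i w @ w!i # drop (Suc i) w" using id_take_nth_drop[OF iu(1)] .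
  have m: "set u \<subseteq> C" "wdeg deg u = deg (w!i) - 1" using moduli_deg[OF iu(3)] by auto
  have "u \<noteq> []" using iu(3) by auto
  then have "length u \<ge> 1" by (cases u) auto
  have "set v \<subseteq> C" unfolding iu(2)[symmetric] using m(1) assms(1) set_take_subset[of i w] set_drop_subset[of "Suc i" w] by auto
  moreover have "wdeg deg v = wdeg deg w - 1"
    unfolding iu(2)[symmetric] using m(2) arg_cong[OF w, of "wdeg deg"] by simp
  moreover have "length w \<le> length v" using iu(1,2) \<open>length u \<ge> 1\<close> by auto
  ultimately show ?thesis by blast
qed

lemma D_eq: "finite W \<Longrightarrow> supp x \<subseteq> W \<Longrightarrow> CE_diff n x v = (\<Sum>w\<in>W. x w * CE_word n w v)"
  unfolding CE_diff_def
  by (rule sum.mono_neutral_left) (auto simp: supp_def)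

lemma D_nz: assumes "CE_diff n x v \<noteq> 0" shows "\<exists>w\<in>supp x. CE_word n w v \<noteq> 0"
proof -
  obtain w where "w \<in> supp x" "x w * CE_word n w v \<noteq> 0"
    using assms unfolding CE_diff_def by (auto elim: sum.not_neutral_contains_not_neutral)
  then show ?thesis by auto
qed

lemma D_A: "x \<in> CE_alg C deg (q+1) \<Longrightarrow> CE_diff n x \<in> CE_alg C deg q"
  unfolding A_eq
proof (safe)
  fix v assume x: "supp x \<subseteq> Wset (q+1)" and "v \<in> supp (CE_diff n x)"
  then have "CE_diff n x v \<noteq> 0" by (simp add: supp_def)
  then obtain w where w: "w \<in> supp x" "CE_word n w v \<noteq> 0" using D_nz by blast
  then have "w \<in> Wset (q+1)" using x by auto
  then show "v \<in> Wset q" using CEword_props[OF _ w(2)] by (auto simp: Wset_def)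
qed

lemma D_lin: "lin (CE_alg C deg q) (CE_diff n)"
  unfolding lin_def
proof (intro ballI)
  fix x y assume xy: "x \<in> CE_alg C deg q" "y \<in> CE_alg C deg q"
  then have s: "supp x \<subseteq> Wset q" "supp y \<subseteq> Wset q" "supp (x+y) \<subseteq> Wset q"
    using sub_A[of q] unfolding sub_def A_eq by auto
  show "CE_diff n (x + y) = CE_diff n x + CE_diff n y"
    by (simp add: fun_eq_iff D_eq[OF finite_Wset s(1)] D_eq[OF finite_Wset s(2)] D_eq[OF finite_Wset s(3)]
        sum.distrib[symmetric] distrib_right)
qed

end

lemma bit_add_nz: "(a::bit) + b \<noteq> 0 \<Longrightarrow> a \<noteq> 0 \<or> b \<noteq> 0" by auto

lemma ext12:
  assumes "\<forall>v. x v \<noteq> 0 \<longrightarrow> length v = 1 \<or> length v = 2"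
    "\<forall>v. y v \<noteq> 0 \<longrightarrow> length v = 1 \<or> length v = 2"
    "p1 x = p1 y" "p2 x = p2 y"
  shows "x = (y :: 'c list \<Rightarrow> bit)"
proof (rule ext)
  fix v
  show "x v = y v"
  proof (cases "x v \<noteq> 0 \<or> y v \<noteq> 0")
    case True
    then have "length v = 1 \<or> length v = 2" using assms(1,2) by blast
    then show ?thesis
    proof
      assume "length v = 1"
      then have "v = [hd v]" by (rule len1)
      then show ?thesis using fun_cong[OF assms(3), of "hd v"] by (simp add: p1_def)
    next
      assume "length v = 2"
      then have "v = [v!0, v!1]" by (rule len2)
      then show ?thesis using fun_cong[OF assms(4), of "(v!0, v!1)"] by (simp add: p2_def)
    qed
  next
    case False then show ?thesis by simp
  qed
qed

context CE begin

lemma CL_eq: "CL C deg q = {x. supp x \<subseteq> {a\<in>C. deg a = q}}"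
  unfolding CL_def supp_def by auto
lemma CL2_eq: "CL2 C deg q = {y. supp y \<subseteq> {(a,b). a\<in>C \<and> b \<in> C \<and> deg a + deg b = q}}"
  unfolding CL2_def supp_def by auto

lemma sub_CL: "sub (CL C deg q)"
  unfolding CL_def sub_def by (auto dest: bit_add_nz)
lemma sub_CL2: "sub (CL2 C deg q)"
  unfolding CL2_def sub_def by (auto dest: bit_add_nz)
lemma finite_CL: "finite (CL C deg q)"
  unfolding CL_eq by (rule finite_supp_funs) (use finC in auto)
lemma finite_CL2: "finite (CL2 C deg q)"
proof -
  have "finite {(a,b). a\<in>C \<and> b \<in> C \<and> deg a + deg b = q}"
    by (rule finite_subset[of _ "C \<times> C"]) (use finC in auto)
  then show ?thesis unfolding CL2_eq by (rule finite_supp_funs)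
qed

lemma dL_lin: "lin S (dL C n)"
  by (simp add: lin_def dL_def fun_eq_iff sum.distrib distrib_right)
lemma deltaL_lin: "lin S (deltaL C n)"
  by (simp add: lin_def deltaL_def fun_eq_iff sum.distrib distrib_right)
lemma dL2_lin: "lin S (dL2 C n)"
  by (simp add: lin_def dL2_def fun_eq_iff sum.distrib distrib_right algebra_simps)

lemma emb_A: assumes "z \<in> CL C deg q" "y \<in> CL2 C deg q" shows "emb z y \<in> CE_alg C deg q"
  unfolding A_eq mem_Collect_eq
proof (rule subsetI)
  fix w assume "w \<in> supp (emb z y)"
  then have ne: "emb z y w \<noteq> 0" by (simp add: supp_def)
  show "w \<in> Wset q"
  proof (cases "length w = 1")
    case True
    then have "z (hd w) \<noteq> 0" using ne by (simp add: emb_def)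
    then have "hd w \<in> C" "deg (hd w) = q" using assms(1) by (auto simp: CL_def)
    moreover obtain a where "w = [a]" using len1[OF True] by blast
    ultimately show ?thesis by (simp add: Wset_def)
  next
    case False
    then have l2: "length w = 2" and "y (w!0, w!1) \<noteq> 0" using ne by (auto simp: emb_def split: if_splits)
    then have "w!0 \<in> C" "w!1 \<in> C" "deg (w!0) + deg (w!1) = q" using assms(2) by (auto simp: CL2_def)
    moreover obtain a b where "w = [a, b]" using len2[OF l2] by blast
    ultimately show ?thesis by (simp add: Wset_def)
  qed
qed

lemma p1_CL: "x \<in> CE_alg C deg q \<Longrightarrow> p1 x \<in> CL C deg q"
  unfolding A_eq CL_def p1_def supp_def Wset_def by auto
lemma p2_CL2: "x \<in> CE_alg C deg q \<Longrightarrow> p2 x \<in> CL2 C deg q"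
  unfolding A_eq CL2_def p2_def supp_def Wset_def by auto

lemma short_A:
  assumes "x \<in> CE_alg C deg q" "1 \<le> q" "q < 3 * e" "x v \<noteq> 0"
  shows "length v = 1 \<or> length v = 2"
proof -
  have v: "set v \<subseteq> C" "wdeg deg v = q" using assms(1,4) unfolding A_eq Wset_def supp_def by auto
  have "v \<noteq> []" using v assms(2) by auto
  moreover have "e * int (length v) < e * 3" using wdeg_ge[OF v(1)] v(2) assms(3) by simp
  then have "length v < 3" using e2 by (simp add: mult_less_cancel_left)
  ultimately have "0 < length v" "length v < 3" by auto
  then show ?thesis by linarith
qed

lemma short_DA:
  assumes "x \<in> CE_alg C deg q" "1 \<le> q" "q < 3 * e" "CE_diff n x v \<noteq> 0"
  shows "length v = 1 \<or> length v = 2"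
proof -
  obtain w where w: "w \<in> supp x" "CE_word n w v \<noteq> 0" using D_nz[OF assms(4)] by blast
  have "length w = 1 \<or> length w = 2" using short_A[OF assms(1-3), of w] w(1) by (simp add: supp_def)
  moreover have "set w \<subseteq> C" using w(1) assms(1) unfolding A_eq Wset_def by auto
  then have "length w \<le> length v" using CEword_props[OF _ w(2)] by blast
  moreover have "CE_diff n x \<in> CE_alg C deg (q - 1)" using D_A[of x "q - 1"] assms(1) by simp
  then have "v \<in> Wset (q - 1)" using assms(4) unfolding A_eq supp_def by auto
  then have "e * int (length v) < e * 3" using wdeg_ge[of v] assms(3) by (auto simp: Wset_def)
  then have "length v < 3" using e2 by (simp add: mult_less_cancel_left)
  ultimately show ?thesis by linarith
qed

end

context CE begin

lemma xout: "\<forall>w\<in>supp x. set w \<subseteq> C \<Longrightarrow> \<not> set w \<subseteq> C \<Longrightarrow> x w = 0"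
  unfolding supp_def by auto

lemma F1:
  assumes fs: "finite (supp x)" and sC: "\<forall>w\<in>supp x. set w \<subseteq> C"
  shows "p1 (CE_diff n x) = dL C n (p1 x)"
proof (rule ext)
  fix b
  let ?g = "\<lambda>w. x w * CE_word n w [b]"
  have "p1 (CE_diff n x) b = sum ?g (supp x)" by (simp add: p1_def CE_diff_def)
  also have "\<dots> = sum ?g ((\<lambda>a. [a]) ` C)"
  proof (rule sum_switch)
    show "finite (supp x)" "finite ((\<lambda>a. [a]) ` C)" using fs finC by auto
    show "\<forall>w\<in>supp x - (\<lambda>a. [a]) ` C. ?g w = 0"
    proof
      fix w assume w: "w \<in> supp x - (\<lambda>a. [a]) ` C"
      then have wC: "set w \<subseteq> C" using sC by auto
      have "length w \<noteq> 1"
      proof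
        assume "length w = 1"
        then have "w = [hd w]" by (rule len1)
        then have "hd w \<in> C" using wC by (metis list.set_intros(1) subsetD)
        then show False using w \<open>w = [hd w]\<close> by (metis DiffD2 image_eqI)
      qed
      show "?g w = 0"
      proof (cases "CE_word n w [b] = 0")
        case False
        then have "length w \<le> 1" using CEword_props[OF wC False] by simp
        then have "w = []" using \<open>length w \<noteq> 1\<close> by (cases w) auto
        then show ?thesis by (simp add: CEword_Nil)
      qed simp
    qed
    show "\<forall>w\<in>(\<lambda>a. [a]) ` C - supp x. ?g w = 0" by (auto simp: supp_def)
  qed
  also have "\<dots> = (\<Sum>a\<in>C. x [a] * n a [b])" by (simp add: sum.reindex inj_on_def CEword_single)
  finally show "p1 (CE_diff n x) b = dL C n (p1 x) b" by (simp add: dL_def p1_def)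
qed

lemma F2:
  assumes fs: "finite (supp x)" and sC: "\<forall>w\<in>supp x. set w \<subseteq> C"
  shows "p2 (CE_diff n x) = deltaL C n (p1 x) + dL2 C n (p2 x)"
proof (rule ext, clarify)
  fix c d
  let ?g = "\<lambda>w. x w * CE_word n w [c, d]"
  let ?W1 = "(\<lambda>a. [a]) ` C" and ?W2 = "(\<lambda>(a,b). [a,b]) ` (C \<times> C)"
  have "p2 (CE_diff n x) (c,d) = sum ?g (supp x)" by (simp add: p2_def CE_diff_def)
  also have "\<dots> = sum ?g (?W1 \<union> ?W2)"
  proof (rule sum_switch)
    show "finite (supp x)" "finite (?W1 \<union> ?W2)" using fs finC by auto
    show "\<forall>w\<in>supp x - (?W1 \<union> ?W2). ?g w = 0"
    proof
      fix w assume w: "w \<in> supp x - (?W1 \<union> ?W2)"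
      then have wC: "set w \<subseteq> C" using sC by auto
      have "length w \<noteq> 1"
      proof
        assume "length w = 1"
        then obtain a where "w = [a]" using len1 by blast
        then show False using w wC by auto
      qed
      have "length w \<noteq> 2"
      proof
        assume "length w = 2"
        then obtain a b where "w = [a, b]" using len2 by blast
        then show False using w wC by auto
      qed
      show "?g w = 0"
      proof (cases "CE_word n w [c, d] = 0")
        case False
        then have "length w \<le> 2" using CEword_props[OF wC False] by simp
        then have "w = []" using \<open>length w \<noteq> 1\<close> \<open>length w \<noteq> 2\<close>
          by (metis le_SucE le_zero_eq length_0_conv numeral_2_eq_2 One_nat_def)
        then show ?thesis by (simp add: CEword_Nil)
      qed simp
    qed
    show "\<forall>w\<in>(?W1 \<union> ?W2) - supp x. ?g w = 0" by (auto simp: supp_def)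
  qed
  also have "\<dots> = sum ?g ?W1 + sum ?g ?W2"
    by (rule sum.union_disjoint) (use finC in auto)
  also have "sum ?g ?W1 = (\<Sum>a\<in>C. x [a] * n a [c, d])"
    by (simp add: sum.reindex inj_on_def CEword_single)
  also have "sum ?g ?W2 = (\<Sum>(a,b)\<in>C \<times> C. x [a,b] * CE_word n [a,b] [c, d])"
    by (subst sum.reindex) (auto simp: inj_on_def case_prod_beta)
  also have "\<dots> = (\<Sum>a\<in>C. \<Sum>b\<in>C. x [a,b] * CE_word n [a,b] [c, d])"
    by (simp add: sum.cartesian_product)
  also have "\<dots> = (\<Sum>a\<in>C. \<Sum>b\<in>C. x [a,b] * (if b = d then n a [c] else 0))
     + (\<Sum>a\<in>C. \<Sum>b\<in>C. x [a,b] * (if a = c then n b [d] else 0))"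
    by (simp add: CEword_pair distrib_left sum.distrib)
  also have "(\<Sum>a\<in>C. \<Sum>b\<in>C. x [a,b] * (if b = d then n a [c] else 0)) = (\<Sum>a\<in>C. x [a,d] * n a [c])"
  proof (rule sum.cong[OF refl])
    fix a assume a: "a \<in> C"
    have "(\<Sum>b\<in>C. x [a,b] * (if b = d then n a [c] else 0)) = (\<Sum>b\<in>C. if b = d then x [a,d] * n a [c] else 0)"
      by (rule sum.cong) auto
    also have "\<dots> = (if d \<in> C then x [a,d] * n a [c] else 0)" using finC by (simp add: sum.delta)
    also have "\<dots> = x [a,d] * n a [c]" using xout[OF sC, of "[a,d]"] by auto
    finally show "(\<Sum>b\<in>C. x [a,b] * (if b = d then n a [c] else 0)) = x [a,d] * n a [c]" .
  qed
  also have "(\<Sum>a\<in>C. \<Sum>b\<in>C. x [a,b] * (if a = c then n b [d] else 0)) = (\<Sum>b\<in>C. x [c,b] * n b [d])"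
  proof -
    have "(\<Sum>a\<in>C. \<Sum>b\<in>C. x [a,b] * (if a = c then n b [d] else 0))
        = (\<Sum>a\<in>C. if a = c then (\<Sum>b\<in>C. x [c,b] * n b [d]) else 0)"
      by (rule sum.cong) auto
    also have "\<dots> = (if c \<in> C then (\<Sum>b\<in>C. x [c,b] * n b [d]) else 0)" using finC by (simp add: sum.delta)
    also have "\<dots> = (\<Sum>b\<in>C. x [c,b] * n b [d])" using xout[OF sC, of "[c,_]"] by auto
    finally show ?thesis .
  qed
  finally show "p2 (CE_diff n x) (c, d) = (deltaL C n (p1 x) + dL2 C n (p2 x)) (c, d)"
    by (simp add: deltaL_def dL2_def p1_def p2_def sum.distrib add.assoc)
qed

end

lemma add_eq0: "(a::'x\<Rightarrow>bit) + b = 0 \<Longrightarrow> a = b"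
proof -
  assume h: "a + b = 0"
  have "a + (a + b) = b" by (simp add: add.assoc[symmetric])
  then show "a = b" using h by simp
qed

lemma p1_0'[simp]: "p1 (\<lambda>v. 0) = 0" by (simp add: p1_def fun_eq_iff)
lemma p2_0'[simp]: "p2 (\<lambda>v. 0) = 0" by (simp add: p2_def fun_eq_iff)

context CE begin

lemma dL_0[simp]: "dL C n 0 = 0" by (simp add: dL_def fun_eq_iff)
lemma deltaL_0[simp]: "deltaL C n 0 = 0" by (simp add: deltaL_def fun_eq_iff)
lemma dL2_0[simp]: "dL2 C n 0 = 0" by (simp add: dL2_def fun_eq_iff)

lemma fsA: "x \<in> CE_alg C deg q \<Longrightarrow> finite (supp x) \<and> (\<forall>w\<in>supp x. set w \<subseteq> C)"
  unfolding CE_alg_def by auto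

lemma zero_CL: "0 \<in> CL C deg q" by (simp add: CL_def)
lemma zero_CL2: "0 \<in> CL2 C deg q" by (simp add: CL2_def)

lemma main:
  assumes p1: "1 \<le> p" and p2: "p \<le> 3 * e - 1"
  shows "LCH_dim C deg n p = ker_delta_dim C deg n p + coker_delta_dim C deg n p"
proof -
  define D where "D = CE_diff n"
  define ZA where "ZA = {x \<in> CE_alg C deg p. D x = 0}"
  define BA where "BA = D ` CE_alg C deg (p+1)"
  define K where "K = {z \<in> ZL C deg n p. deltaL C n z \<in> BL2 C deg n (p - 1)}"
  define B where "B = BL C deg n p"
  define Z2 where "Z2 = ZL2 C deg n p"
  define M where "M = {u + v | u v. u \<in> BL2 C deg n p \<and> v \<in> deltaL C n ` ZL C deg n (p + 1)}"
  have pl: "1 \<le> p" "p < 3 * e" using p1 p2 by auto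
  have F1': "\<And>x q. x \<in> CE_alg C deg q \<Longrightarrow> p1 (D x) = dL C n (p1 x)"
    unfolding D_def using F1 fsA by blast
  have F2': "\<And>x q. x \<in> CE_alg C deg q \<Longrightarrow> p2 (D x) = deltaL C n (p1 x) + dL2 C n (p2 x)"
    unfolding D_def using F2 fsA by blast
  have DA: "\<And>x. x \<in> CE_alg C deg (p+1) \<Longrightarrow> D x \<in> CE_alg C deg p" unfolding D_def by (rule D_A)
  have DDA: "\<And>x. x \<in> CE_alg C deg q \<Longrightarrow> D (D x) = 0" for q unfolding D_def using dsq fsA by blast
  have shA: "\<And>x. x \<in> CE_alg C deg p \<Longrightarrow> \<forall>v. x v \<noteq> 0 \<longrightarrow> length v = 1 \<or> length v = 2"
    using short_A pl by blast
  have shD: "\<And>x. x \<in> CE_alg C deg p \<Longrightarrow> \<forall>v. D x v \<noteq> 0 \<longrightarrow> length v = 1 \<or> length v = 2"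
    unfolding D_def using short_DA pl by blast
  have sh0: "\<forall>v. (0::'c list \<Rightarrow> bit) v \<noteq> 0 \<longrightarrow> length v = 1 \<or> length v = 2" by simp
  have BL2p: "BL2 C deg n (p - 1) = dL2 C n ` CL2 C deg p" by (simp add: BL2_def)

  have sZA: "sub ZA" unfolding ZA_def D_def by (rule sub_kernel[OF sub_A D_lin])
  have fZA: "finite ZA" unfolding ZA_def using finite_A by simp
  have sBA: "sub BA" unfolding BA_def D_def by (rule sub_image[OF sub_A D_lin])
  have fBA: "finite BA" unfolding BA_def using finite_A by simp
  have sZL: "sub (ZL C deg n q)" for q unfolding ZL_def by (rule sub_kernel[OF sub_CL dL_lin])
  have sBL2: "sub (BL2 C deg n q)" for q unfolding BL2_def by (rule sub_image[OF sub_CL2 dL2_lin])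
  have sK: "sub K" unfolding K_def by (rule sub_preimage[OF sZL deltaL_lin sBL2])
  have fK: "finite K" unfolding K_def ZL_def using finite_CL by simp
  have sB: "sub B" unfolding B_def BL_def by (rule sub_image[OF sub_CL dL_lin])
  have fB: "finite B" unfolding B_def BL_def using finite_CL by simp
  have sZ2: "sub Z2" unfolding Z2_def ZL2_def by (rule sub_kernel[OF sub_CL2 dL2_lin])
  have fZ2: "finite Z2" unfolding Z2_def ZL2_def using finite_CL2 by simp
  have sM: "sub M" unfolding M_def by (rule sub_sums[OF sBL2 sub_image[OF sZL deltaL_lin]])
  have fM: "finite M"
  proof -
    have "M \<subseteq> (\<lambda>(u,v). u + v) ` (BL2 C deg n p \<times> deltaL C n ` ZL C deg n (p + 1))"
      unfolding M_def by auto
    moreover have "finite (BL2 C deg n p \<times> deltaL C n ` ZL C deg n (p + 1))"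
      unfolding BL2_def ZL_def using finite_CL finite_CL2 by simp
    ultimately show ?thesis using finite_subset by blast
  qed

  have E1: "p1 ` ZA = K"
  proof (rule set_eqI, rule iffI)
    fix z assume "z \<in> p1 ` ZA"
    then obtain x where x: "x \<in> CE_alg C deg p" "D x = 0" "z = p1 x" unfolding ZA_def by auto
    have "dL C n z = 0" using F1'[OF x(1)] x by simp
    moreover have "deltaL C n z = dL2 C n (p2 x)" using F2'[OF x(1)] x by (simp add: add_eq0)
    moreover have "p2 x \<in> CL2 C deg p" using p2_CL2[OF x(1)] .
    ultimately show "z \<in> K" unfolding K_def ZL_def BL2p using p1_CL[OF x(1)] x(3) by auto
  next
    fix z assume "z \<in> K"
    then obtain y where z: "z \<in> CL C deg p" "dL C n z = 0" "y \<in> CL2 C deg p" "deltaL C n z = dL2 C n y"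
      unfolding K_def ZL_def BL2p by auto
    let ?x = "emb z y"
    have xA: "?x \<in> CE_alg C deg p" using emb_A z by blast
    have "D ?x = 0"
      by (rule ext12[OF shD[OF xA] sh0]) (simp_all add: F1'[OF xA] F2'[OF xA] z)
    then show "z \<in> p1 ` ZA" unfolding ZA_def using xA by (metis (mono_tags, lifting) image_eqI mem_Collect_eq p1_emb)
  qed

  have E2: "bij_betw p2 {x\<in>ZA. p1 x = 0} Z2"
    unfolding bij_betw_def
  proof
    show "inj_on p2 {x\<in>ZA. p1 x = 0}"
      unfolding inj_on_def ZA_def using ext12 shA by (metis (mono_tags, lifting) mem_Collect_eq)
    show "p2 ` {x\<in>ZA. p1 x = 0} = Z2"
    proof (rule set_eqI, rule iffI)
      fix y assume "y \<in> p2 ` {x\<in>ZA. p1 x = 0}"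
      then obtain x where x: "x \<in> CE_alg C deg p" "D x = 0" "p1 x = 0" "y = p2 x" unfolding ZA_def by auto
      have "dL2 C n y = 0" using F2'[OF x(1)] x by simp
      then show "y \<in> Z2" unfolding Z2_def ZL2_def using p2_CL2[OF x(1)] x(4) by auto
    next
      fix y assume "y \<in> Z2"
      then have y: "y \<in> CL2 C deg p" "dL2 C n y = 0" unfolding Z2_def ZL2_def by auto
      let ?x = "emb 0 y"
      have xA: "?x \<in> CE_alg C deg p" using emb_A zero_CL y by blast
      have "D ?x = 0"
        by (rule ext12[OF shD[OF xA] sh0]) (simp_all add: F1'[OF xA] F2'[OF xA] y)
      then show "y \<in> p2 ` {x\<in>ZA. p1 x = 0}" unfolding ZA_def using xA
        by (metis (mono_tags, lifting) image_eqI mem_Collect_eq p1_emb p2_emb)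
    qed
  qed

  have E3: "p1 ` BA = B"
  proof (rule set_eqI, rule iffI)
    fix z assume "z \<in> p1 ` BA"
    then obtain w where w: "w \<in> CE_alg C deg (p+1)" "z = p1 (D w)" unfolding BA_def by auto
    then show "z \<in> B" unfolding B_def BL_def using F1'[OF w(1)] p1_CL[OF w(1)] by auto
  next
    fix z assume "z \<in> B"
    then obtain z0 where z0: "z0 \<in> CL C deg (p+1)" "z = dL C n z0" unfolding B_def BL_def by auto
    have wA: "emb z0 0 \<in> CE_alg C deg (p+1)" using emb_A z0 zero_CL2 by blast
    have "p1 (D (emb z0 0)) = z" using F1'[OF wA] z0 by simp
    then show "z \<in> p1 ` BA" unfolding BA_def using wA by blast
  qed

  have BAA: "BA \<subseteq> CE_alg C deg p" unfolding BA_def using DA by auto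

  have E4: "bij_betw p2 {x\<in>BA. p1 x = 0} M"
    unfolding bij_betw_def
  proof
    show "inj_on p2 {x\<in>BA. p1 x = 0}"
      unfolding inj_on_def using ext12 shA BAA by (metis (mono_tags, lifting) mem_Collect_eq subsetD)
    show "p2 ` {x\<in>BA. p1 x = 0} = M"
    proof (rule set_eqI, rule iffI)
      fix m assume "m \<in> p2 ` {x\<in>BA. p1 x = 0}"
      then obtain w where w: "w \<in> CE_alg C deg (p+1)" "p1 (D w) = 0" "m = p2 (D w)" unfolding BA_def by auto
      have "p1 w \<in> ZL C deg n (p+1)" unfolding ZL_def using p1_CL[OF w(1)] F1'[OF w(1)] w(2) by simp
      moreover have "dL2 C n (p2 w) \<in> BL2 C deg n p" unfolding BL2_def using p2_CL2[OF w(1)] by simp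
      moreover have "m = dL2 C n (p2 w) + deltaL C n (p1 w)" using F2'[OF w(1)] w(3) by (simp add: add.commute)
      ultimately show "m \<in> M" unfolding M_def by blast
    next
      fix m assume "m \<in> M"
      then obtain y z where yz: "y \<in> CL2 C deg (p+1)" "z \<in> CL C deg (p+1)" "dL C n z = 0"
        "m = dL2 C n y + deltaL C n z" unfolding M_def BL2_def ZL_def by auto
      let ?w = "emb z y"
      have wA: "?w \<in> CE_alg C deg (p+1)" using emb_A yz by blast
      have "p1 (D ?w) = 0" using F1'[OF wA] yz by simp
      moreover have "p2 (D ?w) = m" using F2'[OF wA] yz by (simp add: add.commute)
      ultimately show "m \<in> p2 ` {x\<in>BA. p1 x = 0}" unfolding BA_def using wA by blast
    qed
  qed

  have E5: "B \<subseteq> K"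
  proof
    fix z assume "z \<in> B"
    then obtain z0 where z0: "z0 \<in> CL C deg (p+1)" "z = dL C n z0" unfolding B_def BL_def by auto
    have wA: "emb z0 0 \<in> CE_alg C deg (p+1)" using emb_A z0 zero_CL2 by blast
    let ?x = "D (emb z0 0)"
    have xA: "?x \<in> CE_alg C deg p" using DA wA by blast
    have pz: "p1 ?x = z" using F1'[OF wA] z0 by simp
    have dd: "D ?x = 0" using DDA[OF wA] .
    have "dL C n z = 0" using F1'[OF xA] dd pz by simp
    moreover have "deltaL C n z = dL2 C n (p2 ?x)" using F2'[OF xA] dd pz by (simp add: add_eq0)
    ultimately show "z \<in> K" unfolding K_def ZL_def BL2p using p1_CL[OF xA] p2_CL2[OF xA] pz by auto
  qed

  have E6: "M \<subseteq> Z2"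
  proof
    fix m assume "m \<in> M"
    then obtain x where x: "x \<in> BA" "p1 x = 0" "m = p2 x" using E4 unfolding bij_betw_def by auto
    then obtain w where w: "w \<in> CE_alg C deg (p+1)" "x = D w" unfolding BA_def by auto
    have xA: "x \<in> CE_alg C deg p" using x(1) BAA by auto
    have "D x = 0" using DDA[OF w(1)] w(2) by simp
    then have "dL2 C n m = 0" using F2'[OF xA] x by simp
    then show "m \<in> Z2" unfolding Z2_def ZL2_def using p2_CL2[OF xA] x(3) by auto
  qed

  have cZA: "card ZA = card K * card Z2"
    using card_hom[OF fZA sZA p1_lin] E1 bij_betw_same_card[OF E2] by simp
  have cBA: "card BA = card B * card M"
    using card_hom[OF fBA sBA p1_lin] E3 bij_betw_same_card[OF E4] by simp
  have dZA: "zdim ZA = zdim K + zdim Z2" using zdim_eq_iff[OF sZA fZA sK fK cZA sZ2 fZ2] .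
  have dBA: "zdim BA = zdim B + zdim M" using zdim_eq_iff[OF sBA fBA sB fB cBA sM fM] .
  have l1: "zdim B \<le> zdim K" using zdim_mono[OF sK fK sB fB E5] .
  have l2: "zdim M \<le> zdim Z2" using zdim_mono[OF sZ2 fZ2 sM fM E6] .
  have "LCH_dim C deg n p = zdim ZA - zdim BA"
    unfolding LCH_dim_def quot_dim_def ZA_def BA_def D_def ..
  moreover have "ker_delta_dim C deg n p = zdim K - zdim B"
    unfolding ker_delta_dim_def quot_dim_def K_def B_def ..
  moreover have "coker_delta_dim C deg n p = zdim Z2 - zdim M"
    unfolding coker_delta_dim_def quot_dim_def Z2_def M_def ..
  ultimately show ?thesis using dZA dBA l1 l2 by simp
qed

end

theorem mainTheorem13:
  fixes C :: "'c set" and deg :: "'c \<Rightarrow> int" and n :: "'c \<Rightarrow> 'c list \<Rightarrow> bit"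
    and e :: int and p :: int
  assumes finC: "finite C"
    and moduli_deg: "\<And>a bs. n a bs \<noteq> 0 \<Longrightarrow> a \<in> C \<and> set bs \<subseteq> C \<and> wdeg deg bs = deg a - 1"
    and dsq: "\<And>x. finite (supp x) \<Longrightarrow> (\<forall>w\<in>supp x. set w \<subseteq> C) \<Longrightarrow> CE_diff n (CE_diff n x) = 0"
    and e2: "e \<ge> 2"
    and deg_e: "\<And>a. a \<in> C \<Longrightarrow> deg a \<ge> e"
    and p_lo: "1 \<le> p" and p_hi: "p \<le> 3 * e - 1"
  shows "LCH_dim C deg n p = ker_delta_dim C deg n p + coker_delta_dim C deg n p"
proof -
  interpret CE C deg n e
    by (unfold_locales) (fact finC, fact moduli_deg, fact dsq, fact e2, fact deg_e)
  show ?thesis using main[OF p_lo p_hi] .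
qed

end
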